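(* Let $K\ge1$, let $c\in T_K$, and let $M=\{s\in S(\theta): A_K+B_K\theta-c\le s\le c\}$, say $M=\{s_a,s_{a+1},\dots,s_b\}$ with $s_b=c$. Then the factor $P=\lambda(\delta(a))\lambda(\delta(a+1))\cdots\lambda(\delta(b-1))$ of $\Lambda_\theta$ is a palindrome and it occurs exactly once (namely as a suffix) in the prefix $\lambda(\delta(0))\lambda(\delta(1))\cdots\lambda(\delta(b-1))$ of $\Lambda_\theta$.
   Context: Fix an irrational $\theta$ with $1<\theta<2$. Let $S(\theta)=\{i+j\theta : i,j\in\mathbb{N}_0\}$ and let $s_0<s_1<s_2<\cdots$ be its elements in increasing order. Put $\delta(n)=s_{n+1}-s_n$. Let $\lambda$ be the map from the set of values $\{\delta(n):n\ge0\}$ to $\mathbb{N}_0$ that numbers the distinct values in order of first occurrence: $\lambda(\delta(0))=0$, and the $m$-th distinct value to appear in the sequence $\delta(0),\delta(1),\dots$ (counting from $m=0$) receives label $m$. The Lambda word is $\Lambda_\theta=\lambda(\delta(0))\lambda(\delta(1))\lambda(\delta(2))\cdots$. Every positive integer $K$ is either $K=\lfloor k\theta\rfloor+k$ or $K=\lfloor k/\theta\rfloor+k$ for a unique integer $k\ge1$ (and not both). In the first case set $(A_K,B_K)=(\lfloor k\theta\rfloor,k)$; in the second case set $(A_K,B_K)=(k,\lfloor k/\theta\rfloor)$. Define $N_K=\{s\in S(\theta): \min(A_K,B_K\theta)\le s\le \max(A_K,B_K\theta)\}$ and $T_K=\{s\in S(\theta): \max N_K\le s<\max N_{K+1}\}$.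 *)

theory Defs
  imports Complex_Main
begin

definition Sth :: "real \<Rightarrow> real set" where
  "Sth \<theta> = {real i + real j * \<theta> | i j. True}"

text \<open>s_n: the n-th element (from 0) of S(theta) in increasing order.\<close>
definition sq :: "real \<Rightarrow> nat \<Rightarrow> real" where
  "sq \<theta> n = (THE x. x \<in> Sth \<theta> \<and> card {y \<in> Sth \<theta>. y < x} = n)"

definition delta :: "real \<Rightarrow> nat \<Rightarrow> real" where
  "delta \<theta> n = sq \<theta> (Suc n) - sq \<theta> n"

text \<open>Lambda word: the letter at position n is the label of delta(n), where labels number
  the distinct values in order of first occurrence; the label equals the number of distinct
  values occurring strictly before the first occurrence of delta(n).\<close>
definition Lam :: "real \<Rightarrow> nat \<Rightarrow> nat" where
  "Lam \<theta> n = card (delta \<theta> ` {..< (LEAST m. delta \<theta> m = delta \<theta> n)})"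

text \<open>(A_K, B_K) via the Beatty partition.\<close>
definition ABpair :: "real \<Rightarrow> nat \<Rightarrow> nat \<times> nat" where
  "ABpair \<theta> K =
    (if \<exists>k::nat. k \<ge> 1 \<and> K = nat \<lfloor>real k * \<theta>\<rfloor> + k
     then (let k = (THE k::nat. k \<ge> 1 \<and> K = nat \<lfloor>real k * \<theta>\<rfloor> + k)
           in (nat \<lfloor>real k * \<theta>\<rfloor>, k))
     else (let k = (THE k::nat. k \<ge> 1 \<and> K = nat \<lfloor>real k / \<theta>\<rfloor> + k)
           in (k, nat \<lfloor>real k / \<theta>\<rfloor>)))"

definition AK :: "real \<Rightarrow> nat \<Rightarrow> nat" where "AK \<theta> K = fst (ABpair \<theta> K)"
definition BK :: "real \<Rightarrow> nat \<Rightarrow> nat" where "BK \<theta> K = snd (ABpair \<theta> K)"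

definition NK :: "real \<Rightarrow> nat \<Rightarrow> real set" where
  "NK \<theta> K = {s \<in> Sth \<theta>. min (real (AK \<theta> K)) (real (BK \<theta> K) * \<theta>) \<le> s
                      \<and> s \<le> max (real (AK \<theta> K)) (real (BK \<theta> K) * \<theta>)}"

definition TK :: "real \<Rightarrow> nat \<Rightarrow> real set" where
  "TK \<theta> K = {s \<in> Sth \<theta>. Max (NK \<theta> K) \<le> s \<and> s < Max (NK \<theta> (Suc K))}"

end

theory Submission
  imports Defs
begin


lemma irr_int:
  assumes "\<theta> \<notin> \<rat>" "of_int p + of_int q * \<theta> = of_int p' + of_int q' * (\<theta>::real)"
  shows "q = q' \<and> p = p'"
proof -
  have "q = q'"
  proof (rule ccontr)
    assume ne: "q \<noteq> q'"
    have "of_int (q - q') * \<theta> = of_int (p' - p)" using assms(2) by (simp add: algebra_simps)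
    hence "\<theta> = of_int (p' - p) / of_int (q - q')" using ne by (simp add: field_simps)
    hence "\<theta> \<in> \<rat>" by (simp add: Rats_divide)
    thus False using assms(1) by simp
  qed
  thus ?thesis using assms(2) by simp
qed

lemma irr_nat:
  assumes "\<theta> \<notin> \<rat>" "real i + real j * \<theta> = real i' + real j' * (\<theta>::real)"
  shows "i = i' \<and> j = j'"
  using irr_int[OF assms(1), of "int i" "int j" "int i'" "int j'"] assms(2) by simp

lemma Sth_nonneg: "1 < \<theta> \<Longrightarrow> x \<in> Sth \<theta> \<Longrightarrow> 0 \<le> x"
  unfolding Sth_def by auto

lemma Sth_fin: assumes "1 < \<theta>" shows "finite {y \<in> Sth \<theta>. y < x}"
proof -
  let ?N = "nat \<lceil>x\<rceil>"
  have "{y \<in> Sth \<theta>. y < x} \<subseteq> (\<lambda>(i,j). real i + real j * \<theta>) ` ({..?N} \<times> {..?N})"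
  proof
    fix y assume "y \<in> {y \<in> Sth \<theta>. y < x}"
    then obtain i j where y: "y = real i + real j * \<theta>" "y < x" unfolding Sth_def by auto
    have "real j * 1 \<le> real j * \<theta>" using assms by (intro mult_left_mono) auto
    hence "real i < x" "real j < x" using y assms by (auto intro: mult_nonneg_nonneg)
    hence "i \<le> ?N" "j \<le> ?N" by linarith+
    thus "y \<in> (\<lambda>(i,j). real i + real j * \<theta>) ` ({..?N} \<times> {..?N})" using y by force
  qed
  thus ?thesis by (rule finite_subset) auto
qed

definition cnt :: "real \<Rightarrow> real \<Rightarrow> nat" where "cnt \<theta> x = card {y \<in> Sth \<theta>. y < x}"

lemma cnt_less: assumes "1 < \<theta>" "x \<in> Sth \<theta>" "x < y" shows "cnt \<theta> x < cnt \<theta> y"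
  unfolding cnt_def
  apply (rule psubset_card_mono[OF Sth_fin[OF assms(1)]])
  using assms by auto

lemma Sth_add1: assumes "x \<in> Sth \<theta>" shows "x + 1 \<in> Sth \<theta>"
proof -
  obtain i j where "x = real i + real j * \<theta>" using assms unfolding Sth_def by auto
  hence "x + 1 = real (Suc i) + real j * \<theta>" by simp
  thus ?thesis unfolding Sth_def by blast
qed

lemma zero_Sth: "0 \<in> Sth \<theta>" unfolding Sth_def by (auto intro!: exI[of _ 0])

lemma cnt_ex: assumes "1 < \<theta>" shows "\<exists>x\<in>Sth \<theta>. cnt \<theta> x = n"
proof (induction n)
  case 0
  have "{y \<in> Sth \<theta>. y < 0} = {}" using Sth_nonneg[OF assms] by force
  hence "cnt \<theta> 0 = 0" unfolding cnt_def by (metis card.empty)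
  thus ?case using zero_Sth by blast
next
  case (Suc n)
  then obtain x where x: "x \<in> Sth \<theta>" "cnt \<theta> x = n" by blast
  define F where "F = {y \<in> Sth \<theta>. x < y \<and> y < x + 2}"
  have fF: "finite F" unfolding F_def using Sth_fin[OF assms, of "x+2"] by (rule rev_finite_subset) auto
  have "x + 1 \<in> F" unfolding F_def using Sth_add1[OF x(1)] by auto
  hence neF: "F \<noteq> {}" by auto
  define x' where "x' = Min F"
  have x'F: "x' \<in> F" unfolding x'_def using fF neF by simp
  have eq: "{y \<in> Sth \<theta>. y < x'} = insert x {y \<in> Sth \<theta>. y < x}"
  proof (intro equalityI subsetI)
    fix y assume "y \<in> {y \<in> Sth \<theta>. y < x'}"
    hence y: "y \<in> Sth \<theta>" "y < x'" by auto
    have "x' \<le> x + 1" unfolding x'_def using fF \<open>x+1\<in>F\<close> by simp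
    have "\<not> (x < y)"
    proof
      assume "x < y"
      hence "y \<in> F" unfolding F_def using y \<open>x' \<le> x + 1\<close> by auto
      hence "x' \<le> y" unfolding x'_def using fF by simp
      thus False using y by simp
    qed
    thus "y \<in> insert x {y \<in> Sth \<theta>. y < x}" using y by auto
  next
    fix y assume "y \<in> insert x {y \<in> Sth \<theta>. y < x}"
    moreover have "x < x'" using x'F unfolding F_def by simp
    ultimately show "y \<in> {y \<in> Sth \<theta>. y < x'}" using x by auto
  qed
  have "cnt \<theta> x' = Suc n" unfolding cnt_def eq using x Sth_fin[OF assms, of x] unfolding cnt_def by simp
  moreover have "x' \<in> Sth \<theta>" using x'F unfolding F_def by simp
  ultimately show ?case by blast
qed

lemma cnt_inj: assumes "1 < \<theta>" "x \<in> Sth \<theta>" "y \<in> Sth \<theta>" "cnt \<theta> x = cnt \<theta> y" shows "x = y"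
  using cnt_less[OF assms(1)] assms by (metis less_irrefl linorder_neqE)

lemma sq_prop: assumes "1 < \<theta>" shows "sq \<theta> n \<in> Sth \<theta> \<and> cnt \<theta> (sq \<theta> n) = n"
proof -
  have "\<exists>!x. x \<in> Sth \<theta> \<and> cnt \<theta> x = n" using cnt_ex[OF assms] cnt_inj[OF assms] by blast
  from theI'[OF this] show ?thesis unfolding sq_def cnt_def by simp
qed

lemma sq_less: assumes "1 < \<theta>" "n < m" shows "sq \<theta> n < sq \<theta> m"
proof (rule ccontr)
  assume "\<not> sq \<theta> n < sq \<theta> m"
  hence "sq \<theta> m < sq \<theta> n \<or> sq \<theta> m = sq \<theta> n" by auto
  thus False using cnt_less[OF assms(1)] sq_prop[OF assms(1), of n] sq_prop[OF assms(1), of m] assms(2)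
    by (metis less_asym' less_irrefl)
qed

lemma sq_le_iff: assumes "1 < \<theta>" shows "sq \<theta> n \<le> sq \<theta> m \<longleftrightarrow> n \<le> m"
proof
  assume "sq \<theta> n \<le> sq \<theta> m" thus "n \<le> m" using sq_less[OF assms, of m n] by (meson linorder_not_le)
next
  assume "n \<le> m" thus "sq \<theta> n \<le> sq \<theta> m" using sq_less[OF assms, of n m] by (cases "n = m") auto
qed



lemma the_smono:
  assumes "strict_mono (f::nat\<Rightarrow>nat)" "k \<ge> 1" "K = f k"
  shows "(THE k. k \<ge> 1 \<and> K = f k) = k"
  using assms by (intro the_equality) (auto dest: strict_mono_eq)

lemma pair_facts:
  assumes irr: "\<theta> \<notin> \<rat>" and t1: "1 < \<theta>" and K: "K \<ge> 1"
  shows "AK \<theta> K + BK \<theta> K = K \<and> real (BK \<theta> K) * \<theta> < real (AK \<theta> K) + 1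
         \<and> real (AK \<theta> K) < (real (BK \<theta> K) + 1) * \<theta>"
proof (cases "\<exists>k::nat. k \<ge> 1 \<and> K = nat \<lfloor>real k * \<theta>\<rfloor> + k")
  case True
  then obtain k where k: "k \<ge> 1" "K = nat \<lfloor>real k * \<theta>\<rfloor> + k" by blast
  have sm: "strict_mono (\<lambda>k::nat. nat \<lfloor>real k * \<theta>\<rfloor> + k)"
  proof (rule strict_mono_Suc_iff[THEN iffD2], intro allI)
    fix n
    have "real n * \<theta> \<le> real (Suc n) * \<theta>" using t1 by (intro mult_right_mono) auto
    hence "\<lfloor>real n * \<theta>\<rfloor> \<le> \<lfloor>real (Suc n) * \<theta>\<rfloor>" by (rule floor_mono)
    thus "nat \<lfloor>real n * \<theta>\<rfloor> + n < nat \<lfloor>real (Suc n) * \<theta>\<rfloor> + Suc n" by linarith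
  qed
  have th: "(THE k::nat. k \<ge> 1 \<and> K = nat \<lfloor>real k * \<theta>\<rfloor> + k) = k"
    using the_smono[OF sm k] by simp
  have AB: "AK \<theta> K = nat \<lfloor>real k * \<theta>\<rfloor>" "BK \<theta> K = k"
    unfolding AK_def BK_def ABpair_def using True th by (simp_all add: Let_def)
  have nn: "0 \<le> real k * \<theta>" using t1 by simp
  hence r: "real (nat \<lfloor>real k * \<theta>\<rfloor>) = \<lfloor>real k * \<theta>\<rfloor>" by simp
  have f1: "real k * \<theta> < \<lfloor>real k * \<theta>\<rfloor> + 1" by linarith
  have f2: "\<lfloor>real k * \<theta>\<rfloor> \<le> real k * \<theta>" by simp
  have f3: "real k * \<theta> < (real k + 1) * \<theta>" using t1 by (simp add: distrib_right)
  show ?thesis unfolding AB r using k f1 f2 f3 by (intro conjI) (simp, linarith, linarith)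
next
  case False
  define y where "y = real K / (1 + \<theta>)"
  define B0 where "B0 = nat \<lfloor>y\<rfloor>"
  have y0: "0 \<le> y" unfolding y_def using t1 by simp
  have fl: "real_of_int \<lfloor>y\<rfloor> \<le> y" "y < real_of_int \<lfloor>y\<rfloor> + 1" by simp_all
  have "real B0 = real_of_int \<lfloor>y\<rfloor>" unfolding B0_def using y0 by simp
  hence B0y: "real B0 \<le> y" "y < real B0 + 1" using fl by simp_all
  have l1: "real B0 * (1 + \<theta>) \<le> real K" using B0y(1) t1 unfolding y_def by (simp add: field_simps)
  have l2: "real K < (real B0 + 1) * (1 + \<theta>)" using B0y(2) t1 unfolding y_def by (simp add: field_simps)
  have "real B0 * 1 \<le> real B0 * (1 + \<theta>)" using t1 by (intro mult_left_mono) auto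
  hence "real B0 \<le> real K" using l1 by simp
  hence B0K: "B0 \<le> K" by simp
  define A0 where "A0 = K - B0"
  have A0r: "real A0 = real K - real B0" unfolding A0_def using B0K by simp
  have g1: "real B0 * \<theta> \<le> real A0" using l1 A0r by (simp add: algebra_simps)
  have g2: "real A0 < real B0 + 1 + (real B0 + 1) * \<theta> - real B0" using l2 A0r by (simp add: algebra_simps)
  have A0pos: "A0 \<ge> 1"
  proof (rule ccontr)
    assume "\<not> A0 \<ge> 1" hence "A0 = 0" by simp
    hence "B0 = K" unfolding A0_def using B0K by simp
    hence "real B0 * \<theta> > 0" using K t1 by simp
    thus False using g1 \<open>A0 = 0\<close> by simp
  qed
  have ex: "\<exists>k::nat. k \<ge> 1 \<and> K = nat \<lfloor>real k / \<theta>\<rfloor> + k"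
  proof (cases "real A0 < (real B0 + 1) * \<theta>")
    case True
    have "real B0 \<le> real A0 / \<theta>" "real A0 / \<theta> < real B0 + 1"
      using g1 True t1 by (simp_all add: field_simps)
    hence "\<lfloor>real A0 / \<theta>\<rfloor> = int B0" by (intro floor_unique) simp_all
    hence "nat \<lfloor>real A0 / \<theta>\<rfloor> = B0" by simp
    moreover have "K = B0 + A0" using B0K unfolding A0_def by simp
    ultimately have "K = nat \<lfloor>real A0 / \<theta>\<rfloor> + A0" by simp
    thus ?thesis using A0pos by blast
  next
    case F2: False
    have ne: "real A0 \<noteq> (real B0 + 1) * \<theta>"
    proof
      assume "real A0 = (real B0 + 1) * \<theta>"
      hence "real A0 + real 0 * \<theta> = real 0 + real (Suc B0) * \<theta>" by simp
      from irr_nat[OF irr this] show False by simp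
    qed
    have "real A0 - 1 < real (Suc B0) * \<theta>" "real (Suc B0) * \<theta> < real A0" using g2 F2 ne by (simp_all add: algebra_simps)
    hence "\<lfloor>real (Suc B0) * \<theta>\<rfloor> = int (A0 - 1)" using A0pos by (intro floor_unique) (simp_all add: of_nat_diff)
    hence "nat \<lfloor>real (Suc B0) * \<theta>\<rfloor> = A0 - 1" by simp
    moreover have "K = B0 + A0" using B0K unfolding A0_def by simp
    ultimately have "K = nat \<lfloor>real (Suc B0) * \<theta>\<rfloor> + Suc B0" using A0pos by simp
    hence "\<exists>k::nat. k \<ge> 1 \<and> K = nat \<lfloor>real k * \<theta>\<rfloor> + k" by (intro exI[of _ "Suc B0"]) simp
    with False show ?thesis by contradiction
  qed
  then obtain k where k: "k \<ge> 1" "K = nat \<lfloor>real k / \<theta>\<rfloor> + k" by blast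
  have sm: "strict_mono (\<lambda>k::nat. nat \<lfloor>real k / \<theta>\<rfloor> + k)"
  proof (rule strict_mono_Suc_iff[THEN iffD2], intro allI)
    fix n
    have "real n / \<theta> \<le> real (Suc n) / \<theta>" using t1 by (intro divide_right_mono) auto
    hence "\<lfloor>real n / \<theta>\<rfloor> \<le> \<lfloor>real (Suc n) / \<theta>\<rfloor>" by (rule floor_mono)
    thus "nat \<lfloor>real n / \<theta>\<rfloor> + n < nat \<lfloor>real (Suc n) / \<theta>\<rfloor> + Suc n" by linarith
  qed
  have th: "(THE k::nat. k \<ge> 1 \<and> K = nat \<lfloor>real k / \<theta>\<rfloor> + k) = k"
    using the_smono[OF sm k] by simp
  have "ABpair \<theta> K = (k, nat \<lfloor>real k / \<theta>\<rfloor>)"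
    unfolding ABpair_def using th by (subst if_not_P[OF False]) (simp add: Let_def)
  hence AB: "AK \<theta> K = k" "BK \<theta> K = nat \<lfloor>real k / \<theta>\<rfloor>"
    unfolding AK_def BK_def by simp_all
  have nn: "0 \<le> real k / \<theta>" using t1 by simp
  hence r: "real (nat \<lfloor>real k / \<theta>\<rfloor>) = \<lfloor>real k / \<theta>\<rfloor>" by simp
  have "real k / \<theta> < \<lfloor>real k / \<theta>\<rfloor> + 1" by linarith
  hence h1: "real k < (\<lfloor>real k / \<theta>\<rfloor> + 1) * \<theta>" using t1 by (simp add: field_simps)
  have "real_of_int \<lfloor>real k / \<theta>\<rfloor> * \<theta> \<le> (real k / \<theta>) * \<theta>" using t1 by (intro mult_right_mono) auto
  hence h2: "real_of_int \<lfloor>real k / \<theta>\<rfloor> * \<theta> \<le> real k" using t1 by simp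
  show ?thesis unfolding AB r using k h1 h2 by simp
qed


lemma Lam_eq: "delta \<theta> n = delta \<theta> m \<Longrightarrow> Lam \<theta> n = Lam \<theta> m"
  unfolding Lam_def by simp

lemma Lam_lt:
  assumes "(LEAST k. delta \<theta> k = delta \<theta> x) < (LEAST k. delta \<theta> k = delta \<theta> y)"
  shows "Lam \<theta> x < Lam \<theta> y"
proof -
  let ?p = "LEAST k. delta \<theta> k = delta \<theta> x" and ?q = "LEAST k. delta \<theta> k = delta \<theta> y"
  have dp: "delta \<theta> ?p = delta \<theta> x" by (rule LeastI[of _ x]) simp
  have "delta \<theta> ` {..<?p} \<subset> delta \<theta> ` {..<?q}"
  proof
    show "delta \<theta> ` {..<?p} \<subseteq> delta \<theta> ` {..<?q}" using assms by auto
    have "delta \<theta> ?p \<notin> delta \<theta> ` {..<?p}"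
    proof
      assume "delta \<theta> ?p \<in> delta \<theta> ` {..<?p}"
      then obtain k where "k < ?p" "delta \<theta> k = delta \<theta> x" using dp by auto
      thus False using not_less_Least by blast
    qed
    moreover have "delta \<theta> ?p \<in> delta \<theta> ` {..<?q}" using assms by auto
    ultimately show "delta \<theta> ` {..<?p} \<noteq> delta \<theta> ` {..<?q}" by blast
  qed
  hence "card (delta \<theta> ` {..<?p}) < card (delta \<theta> ` {..<?q})" by (intro psubset_card_mono) auto
  thus ?thesis unfolding Lam_def .
qed

lemma Lam_inj: assumes "Lam \<theta> n = Lam \<theta> m" shows "delta \<theta> n = delta \<theta> m"
proof (rule ccontr)
  assume ne: "delta \<theta> n \<noteq> delta \<theta> m"
  let ?p = "LEAST k. delta \<theta> k = delta \<theta> n" and ?q = "LEAST k. delta \<theta> k = delta \<theta> m"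
  have dp: "delta \<theta> ?p = delta \<theta> n" by (rule LeastI[of _ n]) simp
  have dq: "delta \<theta> ?q = delta \<theta> m" by (rule LeastI[of _ m]) simp
  have "?p \<noteq> ?q" using dp dq ne by metis
  hence "?p < ?q \<or> ?q < ?p" by auto
  thus False using Lam_lt[of \<theta> n m] Lam_lt[of \<theta> m n] assms by auto
qed



lemma nat_in_Sth: "real i + real j * \<theta> \<in> Sth \<theta>" unfolding Sth_def by blast

lemma Max_NK:
  assumes irr: "\<theta> \<notin> \<rat>" and t1: "1 < \<theta>" and K: "K \<ge> 1"
  shows "Max (NK \<theta> K) = max (real (AK \<theta> K)) (real (BK \<theta> K) * \<theta>)"
proof -
  let ?m = "max (real (AK \<theta> K)) (real (BK \<theta> K) * \<theta>)"
  have fin: "finite (NK \<theta> K)"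
    using Sth_fin[OF t1, of "?m + 1"] unfolding NK_def by (rule rev_finite_subset) auto
  have A: "real (AK \<theta> K) \<in> Sth \<theta>" using nat_in_Sth[of "AK \<theta> K" 0 \<theta>] by simp
  have B: "real (BK \<theta> K) * \<theta> \<in> Sth \<theta>" using nat_in_Sth[of 0 "BK \<theta> K" \<theta>] by simp
  have "?m \<in> Sth \<theta>" using A B by (metis max_def)
  hence mem: "?m \<in> NK \<theta> K" unfolding NK_def mem_Collect_eq by (intro conjI) simp_all
  show ?thesis
    by (rule Max_eqI[OF fin _ mem]) (auto simp: NK_def)
qed



theorem lemma11:
  fixes \<theta> c :: real and K a b :: nat
  assumes "\<theta> \<notin> \<rat>" and "1 < \<theta>" and "\<theta> < 2"
    and "K \<ge> 1" and "c \<in> TK \<theta> K"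
    and "a \<le> b" and "sq \<theta> b = c"
    and "sq \<theta> ` {a..b} =
         {s \<in> Sth \<theta>. real (AK \<theta> K) + real (BK \<theta> K) * \<theta> - c \<le> s \<and> s \<le> c}"
  shows "rev (map (Lam \<theta>) [a..<b]) = map (Lam \<theta>) [a..<b]
     \<and> (\<forall>i. (i + (b - a) \<le> b \<and>
              take (b - a) (drop i (map (Lam \<theta>) [0..<b])) = map (Lam \<theta>) [a..<b])
            \<longleftrightarrow> i = a)"
proof -
  note irr = assms(1) and t1 = assms(2) and K1 = assms(4)
  define A where "A = AK \<theta> K"
  define B where "B = BK \<theta> K"
  define A' where "A' = AK \<theta> (Suc K)"
  define B' where "B' = BK \<theta> (Suc K)"
  have pK: "A + B = K" "real B * \<theta> < real A + 1" "real A < (real B + 1) * \<theta>"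
    using pair_facts[OF irr t1 K1] unfolding A_def B_def by auto
  have pK1: "A' + B' = Suc K" "real B' * \<theta> < real A' + 1" "real A' < (real B' + 1) * \<theta>"
    using pair_facts[OF irr t1, of "Suc K"] unfolding A'_def B'_def by auto
  have cT: "c \<in> Sth \<theta>" "max (real A) (real B * \<theta>) \<le> c" "c < max (real A') (real B' * \<theta>)"
    using assms(5) Max_NK[OF irr t1 K1] Max_NK[OF irr t1, of "Suc K"]
    unfolding TK_def A_def B_def A'_def B'_def by auto
  have cA: "real A \<le> c" "real B * \<theta> \<le> c" using cT(2) by auto
  have hM: "sq \<theta> ` {a..b} = {s \<in> Sth \<theta>. real A + real B * \<theta> - c \<le> s \<and> s \<le> c}"
    using assms(8) unfolding A_def B_def .
  have Bcases: "B' = B \<or> B' = Suc B"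
  proof -
    have "B' \<le> Suc B"
    proof (rule ccontr)
      assume "\<not> B' \<le> Suc B"
      hence h: "B + 2 \<le> B'" "A' + 1 \<le> A" using pK(1) pK1(1) by auto
      have "real (B + 2) * \<theta> \<le> real B' * \<theta>" using h(1) t1 by (intro mult_right_mono) auto
      moreover have "real A' + 1 \<le> real A" using h(2) by linarith
      ultimately show False using pK(3) pK1(2) t1 by (simp add: algebra_simps)
    qed
    moreover have "B \<le> B'"
    proof (rule ccontr)
      assume "\<not> B \<le> B'"
      hence h: "B' + 1 \<le> B" "A + 2 \<le> A'" using pK(1) pK1(1) by auto
      have "real (B' + 1) * \<theta> \<le> real B * \<theta>" using h(1) t1 by (intro mult_right_mono) auto
      moreover have "real A + 2 \<le> real A'" using h(2) by linarith
      ultimately show False using pK(2) pK1(3) t1 by (simp add: algebra_simps)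
    qed
    ultimately show ?thesis by auto
  qed
  have cB: "c < real A + 1" "c < (real B + 1) * \<theta>"
  proof -
    have "c < real A + 1 \<and> c < (real B + 1) * \<theta>"
    proof (cases "B' = B")
      case True
      hence "A' = Suc A" using pK(1) pK1(1) by simp
      thus ?thesis using True cT(3) pK(2) pK1(3) by (auto simp: max_def split: if_splits)
    next
      case False
      hence "B' = Suc B" "A' = A" using Bcases pK(1) pK1(1) by auto
      thus ?thesis using cT(3) cA pK1(2) by (auto simp: max_def algebra_simps split: if_splits)
    qed
    thus "c < real A + 1" "c < (real B + 1) * \<theta>" by auto
  qed
  define r where "r x = real A + real B * \<theta> - x" for x
  define M where "M = {s \<in> Sth \<theta>. real A + real B * \<theta> - c \<le> s \<and> s \<le> c}"
  have rS: "r x \<in> Sth \<theta>" if x: "x \<in> Sth \<theta>" "x \<le> c" for x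
  proof -
    obtain i j where ij: "x = real i + real j * \<theta>" using x(1) unfolding Sth_def by auto
    have "0 \<le> real j * \<theta>" using t1 by simp
    hence "real i < real A + 1" using ij x(2) cB(1) by linarith
    hence iA: "i \<le> A" by linarith
    have "real j * \<theta> < (real B + 1) * \<theta>" using ij x(2) cB(2) by linarith
    hence "real j < real B + 1" using t1 by (simp add: mult_less_cancel_right)
    hence jB: "j \<le> B" by linarith
    have "r x = real (A - i) + real (B - j) * \<theta>" unfolding r_def ij using iA jB
      by (simp add: of_nat_diff algebra_simps)
    thus ?thesis by (simp add: nat_in_Sth)
  qed
  have rM: "r x \<in> M" if "x \<in> M" for x
    using that rS unfolding M_def r_def by auto
  have hM': "sq \<theta> ` {a..b} = M" using hM unfolding M_def .
  define len where "len = b - a"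
  have bal: "b = a + len" unfolding len_def using assms(6) by simp
  have sqM: "sq \<theta> (a + t) \<in> M" if "t \<le> len" for t
    using that hM' bal by auto
  define h where "h t = (SOME m. m \<in> {a..b} \<and> sq \<theta> m = r (sq \<theta> (a + t)))" for t
  have hP: "h t \<in> {a..b} \<and> sq \<theta> (h t) = r (sq \<theta> (a + t))" if "t \<le> len" for t
  proof -
    have "r (sq \<theta> (a + t)) \<in> sq \<theta> ` {a..b}" using rM[OF sqM[OF that]] hM' by simp
    hence "\<exists>m. m \<in> {a..b} \<and> sq \<theta> m = r (sq \<theta> (a + t))" by auto
    thus ?thesis unfolding h_def by (rule someI_ex)
  qed
  have hdec: "h t2 < h t1" if "t1 < t2" "t2 \<le> len" for t1 t2
  proof -
    have "sq \<theta> (a + t1) < sq \<theta> (a + t2)" using sq_less[OF t1] that by simp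
    hence "sq \<theta> (h t2) < sq \<theta> (h t1)" using hP[of t1] hP[of t2] that unfolding r_def by simp
    thus ?thesis using sq_le_iff[OF t1, of "h t1" "h t2"] by linarith
  qed
  have up: "t \<le> len \<Longrightarrow> h t + t \<le> b" for t
  proof (induction t)
    case 0 thus ?case using hP[of 0] by simp
  next
    case (Suc t)
    thus ?case using hdec[of t "Suc t"] by simp
  qed
  have low: "d \<le> len \<Longrightarrow> b \<le> h (len - d) + (len - d)" for d
  proof (induction d)
    case 0 thus ?case using hP[of len] bal by simp
  next
    case (Suc d)
    hence "h (len - d) < h (len - Suc d)" using hdec[of "len - Suc d" "len - d"] by simp
    thus ?case using Suc by simp
  qed
  have hb: "h t = b - t" if "t \<le> len" for t
    using up[OF that] low[of "len - t"] that by simp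
  have rsq: "r (sq \<theta> (a + t)) = sq \<theta> (b - t)" if "t \<le> len" for t
    using hP[OF that] hb[OF that] by simp
  have dsym: "delta \<theta> (a + t) = delta \<theta> (b - Suc t)" if "t < len" for t
  proof -
    have e: "b - t = Suc (b - Suc t)" using that bal by simp
    have "delta \<theta> (a + t) = r (sq \<theta> (a + t)) - r (sq \<theta> (a + Suc t))"
      unfolding delta_def r_def by simp
    also have "\<dots> = sq \<theta> (b - t) - sq \<theta> (b - Suc t)" using rsq[of t] rsq[of "Suc t"] that by simp
    also have "\<dots> = delta \<theta> (b - Suc t)" unfolding delta_def e by simp
    finally show ?thesis .
  qed
  have pal: "rev (map (Lam \<theta>) [a..<b]) = map (Lam \<theta>) [a..<b]"
  proof (rule nth_equalityI)
    show "length (rev (map (Lam \<theta>) [a..<b])) = length (map (Lam \<theta>) [a..<b])" by simp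
  next
    fix t assume "t < length (rev (map (Lam \<theta>) [a..<b]))"
    hence t: "t < len" unfolding len_def by simp
    have "rev (map (Lam \<theta>) [a..<b]) ! t = Lam \<theta> (a + (len - Suc t))"
      using t by (simp add: rev_nth len_def)
    also have "a + (len - Suc t) = b - Suc t" using t bal by simp
    also have "Lam \<theta> (b - Suc t) = Lam \<theta> (a + t)" using dsym[OF t] by (intro Lam_eq) simp
    also have "\<dots> = map (Lam \<theta>) [a..<b] ! t" using t bal by simp
    finally show "rev (map (Lam \<theta>) [a..<b]) ! t = map (Lam \<theta>) [a..<b] ! t" .
  qed
  have uniq: "(i + (b - a) \<le> b \<and> take (b - a) (drop i (map (Lam \<theta>) [0..<b])) = map (Lam \<theta>) [a..<b])
            \<longleftrightarrow> i = a" for i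
  proof
    assume "i = a"
    thus "i + (b - a) \<le> b \<and> take (b - a) (drop i (map (Lam \<theta>) [0..<b])) = map (Lam \<theta>) [a..<b]"
      using assms(6) by (simp add: drop_map)
  next
    assume H: "i + (b - a) \<le> b \<and> take (b - a) (drop i (map (Lam \<theta>) [0..<b])) = map (Lam \<theta>) [a..<b]"
    hence il: "i + len \<le> b" and eq: "take len (drop i (map (Lam \<theta>) [0..<b])) = map (Lam \<theta>) [a..<b]"
      unfolding len_def by auto
    have LL: "Lam \<theta> (i + t) = Lam \<theta> (a + t)" if "t < len" for t
    proof -
      have "take len (drop i (map (Lam \<theta>) [0..<b])) ! t = map (Lam \<theta>) [a..<b] ! t" using eq by simp
      thus ?thesis using that il bal by simp
    qed
    have dd: "delta \<theta> (i + t) = delta \<theta> (a + t)" if "t < len" for t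
      using Lam_inj[OF LL[OF that]] .
    have diff: "t \<le> len \<Longrightarrow> sq \<theta> (i + t) - sq \<theta> i = sq \<theta> (a + t) - sq \<theta> a" for t
    proof (induction t)
      case 0 thus ?case by simp
    next
      case (Suc t)
      hence "delta \<theta> (i + t) = delta \<theta> (a + t)" using dd by simp
      thus ?case using Suc unfolding delta_def by simp
    qed
    show "i = a"
    proof (rule ccontr)
      assume "i \<noteq> a"
      hence ia: "i < a" using il bal by simp
      define d where "d = sq \<theta> a - sq \<theta> i"
      have dpos: "d > 0" unfolding d_def using sq_less[OF t1 ia] by simp
      have shift: "x - d \<in> Sth \<theta>" if "x \<in> M" for x
      proof -
        have "x \<in> sq \<theta> ` {a..b}" using that hM' by simp
        then obtain m where m: "m \<in> {a..b}" "x = sq \<theta> m" by auto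
        define t where "t = m - a"
        have "t \<le> len" "m = a + t" using m bal unfolding t_def by auto
        hence "sq \<theta> (i + t) = x - d" using diff[of t] m unfolding d_def by simp
        thus ?thesis using sq_prop[OF t1] by metis
      qed
      have AM: "real A \<in> M" unfolding M_def using cA nat_in_Sth[of A 0 \<theta>] by auto
      have BM: "real B * \<theta> \<in> M" unfolding M_def using cA nat_in_Sth[of 0 B \<theta>] by auto
      obtain i1 j1 where e1: "real A - d = real i1 + real j1 * \<theta>" using shift[OF AM] unfolding Sth_def by auto
      obtain i2 j2 where e2: "real B * \<theta> - d = real i2 + real j2 * \<theta>" using shift[OF BM] unfolding Sth_def by auto
      have "of_int (int A - int i1) + of_int (- int j1) * \<theta> = of_int (- int i2) + of_int (int B - int j2) * \<theta>"
        using e1 e2 by (simp add: algebra_simps)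
      from irr_int[OF irr this] have "- int j1 = int B - int j2" "int A - int i1 = - int i2" by auto
      hence "d = - real i2 - real j1 * \<theta>" using e1 by (simp add: algebra_simps)
      moreover have "0 \<le> real j1 * \<theta>" using t1 by simp
      ultimately show False using dpos by simp
    qed
  qed
  show ?thesis using pal uniq by blast
qed


end
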